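(* Suppose the set $\mathcal P_e$ of PNE of the M-FSIG is nonempty, let $\tilde{\mathbf a}\in\arg\min_{\mathbf a\in\mathcal P_e}W(\mathbf a)$ and let $\mathcal S_{\tilde{\mathbf a}}$ be the set of sharing users in $\tilde{\mathbf a}$. Then \[ \frac{\min_{\mathbf a\in\mathcal P_e}W(\mathbf a)}{\max_{\mathbf a\in\{1,\dots,K\}^N}W(\mathbf a)}\ \ge\ \frac{\sum_{n\in\{1,\dots,N\}\setminus\mathcal S_{\tilde{\mathbf a}}}w_n\log_2\!\big(1+\frac{P_n}{N_0}|h_{n,n,(K-M+1)}|^2\big)}{\sum_{n=1}^N w_n\log_2\!\big(1+\frac{P_n}{N_0}|h_{n,n,(K)}|^2\big)}. \]
   Context: $N$ users, $K$ REs, nonzero complex channel gains $h_{n_1,n_2,k}$, powers $P_n>0$, noise $N_0>0$, weights $w_n>0$. Profiles $\mathbf a\in\{1,\dots,K\}^N$; interference $I_k(\mathbf a_{-n})=\sum_{m'\ne n:\,a_{m'}=k}|h_{m',n,k}|^2P_{m'}$; rate $R_n(\mathbf a)=\log_2\!\big(1+\frac{P_n|h_{n,n,a_n}|^2}{N_0+I_{a_n}(\mathbf a_{-n})}\big)$; $W(\mathbf a)=\sum_n w_nR_n(\mathbf a)$. $|h_{n,n,(j)}|$ is the $j$-th smallest of $|h_{n,n,1}|,\dots,|h_{n,n,K}|$. M-FSIG with integer parameter $1\le M\le K$: utility $u_n(\mathbf a)=\log_2\!\big(1+\frac{P_n|h_{n,n,(K-M+1)}|^2}{N_0+I_{a_n}(\mathbf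 a_{-n})}\big)$ if $|h_{n,n,a_n}|\ge|h_{n,n,(K-M+1)}|$, and $0$ otherwise; PNE are profiles where no user can strictly improve his utility unilaterally. A sharing user is a user $n$ such that $a_{m'}=a_n$ for some $m'\neq n$. *)

theory Defs
  imports "HOL-Analysis.Analysis"
begin

text \<open>Users are indexed by 1..N, resource elements (REs) by 1..K.
  A channel gain h n1 n2 k is the gain from user n1 to user n2 on RE k.
  Strategy profiles are extensional functions in {1..N} to {1..K}.\<close>

definition profiles :: "nat \<Rightarrow> nat \<Rightarrow> (nat \<Rightarrow> nat) set" where
  "profiles N K = ({1..N} \<rightarrow>\<^sub>E {1..K})"

definition interf :: "nat \<Rightarrow> (nat \<Rightarrow> nat \<Rightarrow> nat \<Rightarrow> complex) \<Rightarrow> (nat \<Rightarrow> real)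
    \<Rightarrow> (nat \<Rightarrow> nat) \<Rightarrow> nat \<Rightarrow> nat \<Rightarrow> real" where
  "interf N h P a n k = (\<Sum>m\<in>{m\<in>{1..N}. m \<noteq> n \<and> a m = k}. (cmod (h m n k))\<^sup>2 * P m)"

definition rate :: "nat \<Rightarrow> (nat \<Rightarrow> nat \<Rightarrow> nat \<Rightarrow> complex) \<Rightarrow> (nat \<Rightarrow> real) \<Rightarrow> real
    \<Rightarrow> (nat \<Rightarrow> nat) \<Rightarrow> nat \<Rightarrow> real" where
  "rate N h P N0 a n =
     log 2 (1 + P n * (cmod (h n n (a n)))\<^sup>2 / (N0 + interf N h P a n (a n)))"

definition welfare :: "nat \<Rightarrow> (nat \<Rightarrow> nat \<Rightarrow> nat \<Rightarrow> complex) \<Rightarrow> (nat \<Rightarrow> real) \<Rightarrow> real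
    \<Rightarrow> (nat \<Rightarrow> real) \<Rightarrow> (nat \<Rightarrow> nat) \<Rightarrow> real" where
  "welfare N h P N0 w a = (\<Sum>n\<in>{1..N}. w n * rate N h P N0 a n)"

definition ordgain :: "nat \<Rightarrow> (nat \<Rightarrow> nat \<Rightarrow> nat \<Rightarrow> complex) \<Rightarrow> nat \<Rightarrow> nat \<Rightarrow> real" where
  "ordgain K h n j = sort (map (\<lambda>k. cmod (h n n k)) [1..<K+1]) ! (j - 1)"

definition util :: "nat \<Rightarrow> nat \<Rightarrow> nat \<Rightarrow> (nat \<Rightarrow> nat \<Rightarrow> nat \<Rightarrow> complex) \<Rightarrow> (nat \<Rightarrow> real)
    \<Rightarrow> real \<Rightarrow> (nat \<Rightarrow> nat) \<Rightarrow> nat \<Rightarrow> real" where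
  "util N K M h P N0 a n =
     (if cmod (h n n (a n)) \<ge> ordgain K h n (K - M + 1)
      then log 2 (1 + P n * (ordgain K h n (K - M + 1))\<^sup>2 / (N0 + interf N h P a n (a n)))
      else 0)"

definition PNE :: "nat \<Rightarrow> nat \<Rightarrow> nat \<Rightarrow> (nat \<Rightarrow> nat \<Rightarrow> nat \<Rightarrow> complex) \<Rightarrow> (nat \<Rightarrow> real)
    \<Rightarrow> real \<Rightarrow> (nat \<Rightarrow> nat) set" where
  "PNE N K M h P N0 = {a \<in> profiles N K. \<forall>n\<in>{1..N}. \<forall>k\<in>{1..K}.
      util N K M h P N0 (a(n := k)) n \<le> util N K M h P N0 a n}"

definition sharing_users :: "nat \<Rightarrow> (nat \<Rightarrow> nat) \<Rightarrow> nat set" where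
  "sharing_users N a = {n \<in> {1..N}. \<exists>m\<in>{1..N}. m \<noteq> n \<and> a m = a n}"

end

theory Submission
  imports Defs
begin

lemma ordgain_mem:
  assumes "1 \<le> j" "j \<le> K"
  shows "\<exists>k\<in>{1..K}. ordgain K h n j = cmod (h n n k)"
proof -
  let ?xs = "map (\<lambda>k. cmod (h n n k)) [1..<K+1]"
  have "sort ?xs ! (j-1) \<in> set (sort ?xs)"
    using assms by (intro nth_mem) simp
  then have "sort ?xs ! (j-1) \<in> set ?xs" by simp
  then show ?thesis unfolding ordgain_def by auto
qed

lemma ordgain_max:
  assumes "k \<in> {1..K}"
  shows "cmod (h n n k) \<le> ordgain K h n K"
proof -
  let ?xs = "map (\<lambda>k. cmod (h n n k)) [1..<K+1]"
  have "k \<in> set [1..<K+1]" using assms by auto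
  then have "cmod (h n n k) \<in> set ?xs" by (simp only: set_map) (rule imageI)
  then have "cmod (h n n k) \<in> set (sort ?xs)" by (simp only: set_sort)
  then obtain i where i: "i < length (sort ?xs)" "sort ?xs ! i = cmod (h n n k)"
    unfolding in_set_conv_nth by blast
  have len: "length (sort ?xs) = K" by simp
  have "sort ?xs ! i \<le> sort ?xs ! (K - 1)"
    using i len by (intro sorted_nth_mono) auto
  then show ?thesis using i unfolding ordgain_def by simp
qed

lemma interf_nonneg:
  assumes "\<And>n. n \<in> {1..N} \<Longrightarrow> P n > 0"
  shows "interf N h P a n k \<ge> 0"
  unfolding interf_def
proof (intro sum_nonneg)
  fix x assume "x \<in> {m \<in> {1..N}. m \<noteq> n \<and> a m = k}"
  then have "P x > 0" using assms by auto
  then show "0 \<le> (cmod (h x n k))\<^sup>2 * P x" by simp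
qed

theorem mainTheorem6:
  fixes N K M :: nat
    and h :: "nat \<Rightarrow> nat \<Rightarrow> nat \<Rightarrow> complex"
    and P w :: "nat \<Rightarrow> real" and N0 :: real
    and atil :: "nat \<Rightarrow> nat"
  assumes "N \<ge> 1" and "K \<ge> 1" and "1 \<le> M" and "M \<le> K"
    and "\<And>n1 n2 k. n1 \<in> {1..N} \<Longrightarrow> n2 \<in> {1..N} \<Longrightarrow> k \<in> {1..K} \<Longrightarrow> h n1 n2 k \<noteq> 0"
    and "\<And>n. n \<in> {1..N} \<Longrightarrow> P n > 0"
    and "N0 > 0"
    and "\<And>n. n \<in> {1..N} \<Longrightarrow> w n > 0"
    and "PNE N K M h P N0 \<noteq> {}"
    and "atil \<in> PNE N K M h P N0"
    and "\<And>a. a \<in> PNE N K M h P N0 \<Longrightarrow> welfare N h P N0 w atil \<le> welfare N h P N0 w a"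
  shows "(Min (welfare N h P N0 w ` PNE N K M h P N0))
           / (Max (welfare N h P N0 w ` profiles N K))
         \<ge> (\<Sum>n\<in>{1..N} - sharing_users N atil.
               w n * log 2 (1 + P n / N0 * (ordgain K h n (K - M + 1))\<^sup>2))
           / (\<Sum>n\<in>{1..N}. w n * log 2 (1 + P n / N0 * (ordgain K h n K)\<^sup>2))"
proof -
  note a = assms
  have fin: "finite (profiles N K)" unfolding profiles_def by (simp add: finite_PiE)
  have sub: "PNE N K M h P N0 \<subseteq> profiles N K" unfolding PNE_def by auto
  have atp: "atil \<in> profiles N K" using a(10) sub by auto
  have jb1: "1 \<le> K - M + 1" by simp
  have jb2: "K - M + 1 \<le> K" using a(3,4) by arith
  define g where "g n = ordgain K h n (K - M + 1)" for n
  define G where "G n = ordgain K h n K" for n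
  have gpos: "g n > 0" if "n \<in> {1..N}" for n
  proof -
    obtain k where "k \<in> {1..K}" "g n = cmod (h n n k)"
      using ordgain_mem[OF jb1 jb2, of h n] unfolding g_def by blast
    then show ?thesis using a(5) that by auto
  qed
  have Gpos: "G n > 0" if "n \<in> {1..N}" for n
  proof -
    obtain k where "k \<in> {1..K}" "G n = cmod (h n n k)"
      using ordgain_mem[of K K h n] a(2) unfolding G_def by auto
    then show ?thesis using a(5) that by auto
  qed
  have prof: "x n \<in> {1..K}" if "x \<in> profiles N K" "n \<in> {1..N}" for x n
    using that unfolding profiles_def by auto
  have rate_le: "rate N h P N0 x n \<le> log 2 (1 + P n / N0 * (G n)\<^sup>2)"
    if "x \<in> profiles N K" "n \<in> {1..N}" for x n
  proof -
    have I: "interf N h P x n (x n) \<ge> 0" using interf_nonneg a(6) by blast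
    have c: "cmod (h n n (x n)) \<le> G n" unfolding G_def using ordgain_max prof[OF that] by blast
    have c2: "(cmod (h n n (x n)))\<^sup>2 \<le> (G n)\<^sup>2" using c by (simp add: power_mono)
    have Pn: "P n > 0" using a(6) that by auto
    have "P n * (cmod (h n n (x n)))\<^sup>2 / (N0 + interf N h P x n (x n))
          \<le> P n * (cmod (h n n (x n)))\<^sup>2 / N0"
      using I a(7) Pn by (intro divide_left_mono) auto
    also have "\<dots> \<le> P n / N0 * (G n)\<^sup>2" using c2 Pn a(7)
      by (simp add: divide_right_mono)
    finally have le: "P n * (cmod (h n n (x n)))\<^sup>2 / (N0 + interf N h P x n (x n))
          \<le> P n / N0 * (G n)\<^sup>2" .
    have "0 \<le> P n * (cmod (h n n (x n)))\<^sup>2 / (N0 + interf N h P x n (x n))"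
      using I a(7) Pn by auto
    then show ?thesis unfolding rate_def using le by simp
  qed
  have rate_pos: "rate N h P N0 x n > 0" if "x \<in> profiles N K" "n \<in> {1..N}" for x n
  proof -
    have I: "interf N h P x n (x n) \<ge> 0" using interf_nonneg a(6) by blast
    have "h n n (x n) \<noteq> 0" using a(5) prof[OF that] that(2) by auto
    then have "(cmod (h n n (x n)))\<^sup>2 > 0" by simp
    moreover have "P n > 0" using a(6) that by auto
    ultimately have "P n * (cmod (h n n (x n)))\<^sup>2 / (N0 + interf N h P x n (x n)) > 0"
      using I a(7) by auto
    then show ?thesis unfolding rate_def by simp
  qed
  have ge: "cmod (h n n (atil n)) \<ge> g n" if n: "n \<in> {1..N}" for n
  proof (rule ccontr)
    assume nge: "\<not> ?thesis"
    obtain k where k: "k \<in> {1..K}" "g n = cmod (h n n k)"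
      using ordgain_mem[OF jb1 jb2, of h n] unfolding g_def by blast
    have "util N K M h P N0 (atil(n := k)) n \<le> util N K M h P N0 atil n"
      using a(10) n k(1) unfolding PNE_def by auto
    moreover have "util N K M h P N0 atil n = 0"
      using nge unfolding util_def g_def by auto
    moreover have "util N K M h P N0 (atil(n := k)) n > 0"
    proof -
      have I: "interf N h P (atil(n := k)) n k \<ge> 0" using interf_nonneg a(6) by blast
      have "P n * (g n)\<^sup>2 / (N0 + interf N h P (atil(n := k)) n k) > 0"
        using I a(7) a(6)[OF n] gpos[OF n] by auto
      then show ?thesis using k unfolding util_def g_def by simp
    qed
    ultimately show False by simp
  qed
  have nonsh: "rate N h P N0 atil n \<ge> log 2 (1 + P n / N0 * (g n)\<^sup>2)"
    if n: "n \<in> {1..N} - sharing_users N atil" for n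
  proof -
    have n1: "n \<in> {1..N}" using n by auto
    have e: "{m\<in>{1..N}. m \<noteq> n \<and> atil m = atil n} = {}"
      using n unfolding sharing_users_def by auto
    have I: "interf N h P atil n (atil n) = 0" unfolding interf_def e by (rule sum.empty)
    have c2: "(g n)\<^sup>2 \<le> (cmod (h n n (atil n)))\<^sup>2"
      using ge[OF n1] gpos[OF n1] by (simp add: power_mono)
    have Pn: "P n > 0" using a(6) n1 by auto
    have le: "P n / N0 * (g n)\<^sup>2 \<le> P n * (cmod (h n n (atil n)))\<^sup>2 / N0"
      using c2 Pn a(7) by (simp add: divide_right_mono)
    have "0 \<le> P n / N0 * (g n)\<^sup>2" using Pn a(7) by simp
    then show ?thesis unfolding rate_def I using le by simp
  qed
  define W where "W = welfare N h P N0 w atil"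
  define D where "D = (\<Sum>n\<in>{1..N}. w n * log 2 (1 + P n / N0 * (G n)\<^sup>2))"
  define Num where "Num = (\<Sum>n\<in>{1..N} - sharing_users N atil. w n * log 2 (1 + P n / N0 * (g n)\<^sup>2))"
  have "Num \<le> (\<Sum>n\<in>{1..N} - sharing_users N atil. w n * rate N h P N0 atil n)"
    unfolding Num_def using nonsh a(8) by (intro sum_mono mult_left_mono) (auto simp: less_imp_le)
  also have "\<dots> \<le> W" unfolding W_def welfare_def
    using rate_pos[OF atp] a(8) by (intro sum_mono2) (auto intro: less_imp_le)
  finally have NW: "Num \<le> W" .
  have Wpos: "W > 0" unfolding W_def welfare_def
    using rate_pos[OF atp] a(8) a(1) by (intro sum_pos) auto
  have Dpos: "D > 0" unfolding D_def
  proof (intro sum_pos)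
    fix n assume n: "n \<in> {1..N}"
    have "P n / N0 * (G n)\<^sup>2 > 0" using a(6)[OF n] a(7) Gpos[OF n] by simp
    then show "0 < w n * log 2 (1 + P n / N0 * (G n)\<^sup>2)" using a(8)[OF n] by simp
  qed (use a(1) in auto)
  have Min: "Min (welfare N h P N0 w ` PNE N K M h P N0) = W"
    unfolding W_def using a(10,11) finite_subset[OF sub fin]
    by (intro Min_eqI) auto
  have MaxD: "Max (welfare N h P N0 w ` profiles N K) \<le> D"
  proof (subst Max_le_iff)
    show "finite (welfare N h P N0 w ` profiles N K)" using fin by simp
    show "welfare N h P N0 w ` profiles N K \<noteq> {}" using atp by auto
    show "\<forall>x\<in>welfare N h P N0 w ` profiles N K. x \<le> D"
    proof
      fix y assume "y \<in> welfare N h P N0 w ` profiles N K"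
      then obtain x where x: "x \<in> profiles N K" "y = welfare N h P N0 w x" by auto
      show "y \<le> D" unfolding x D_def welfare_def
      proof (rule sum_mono)
        fix n assume n: "n \<in> {1..N}"
        show "w n * rate N h P N0 x n \<le> w n * log 2 (1 + P n / N0 * (G n)\<^sup>2)"
          using rate_le[OF x(1) n] a(8)[OF n] by (intro mult_left_mono) auto
      qed
    qed
  qed
  have MaxW: "W \<le> Max (welfare N h P N0 w ` profiles N K)"
    unfolding W_def using fin atp by (intro Max_ge) auto
  have "Num / D \<le> W / D" using NW Dpos by (simp add: divide_right_mono)
  also have "\<dots> \<le> W / Max (welfare N h P N0 w ` profiles N K)"
    using Wpos MaxW MaxD by (intro divide_left_mono) auto
  finally show ?thesis unfolding Min Num_def D_def g_def G_def .
qed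
end
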